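(* Let $\Bbbk$ be a field and let $I\subseteq \Bbbk[x,y,z]$ be a monomial ideal generated in degree $d$ having a linear resolution, with minimal monomial generators $m_1,\ldots,m_r$ listed in tree ordering. For $2\le j\le r$ let $I_j=(m_1,\ldots,m_j)$. If $u,v\in\mathcal G(I_j)$ are on the same level (i.e. $\deg_z u=\deg_z v$), then the graph $G_{I_j}(u,v)$ is connected.
   Context: $\mathcal G(J)$ is the minimal monomial generating set of a monomial ideal $J$. The dual graph $G_J$ has vertex set $\mathcal G(J)$, with $\{f,g\}$ an edge iff $\deg\operatorname{lcm}(f,g)=\deg f+1=\deg g+1$; $G_J(f,g)$ is the induced subgraph of $G_J$ on the generators of $J$ dividing $\operatorname{lcm}(f,g)$. A monomial is on the $c$-th level if its $z$-degree is $c$. Tree ordering (for $I$ generated in degree $d$ and linearly presented, so its generators occupy consecutive levels $c,c+1,\ldots,c+p-1$): the generators are ordered level by level in increasing $z$-degree. On level $c$, generators are ordered by strictly decreasing $x$-degree. For $0<i<p$, on level $c+i$, let $m_{i,1}$ be the generator on level $c+i$ of highest $x$-degree that is joined by an edge of $G_I$ to some generator on level $c+i-1$; put $m_{i,1}$ first, then the generators on level $c+i$ with $x$-degree smaller than that of $m_{i,1}$ in decreasing order of $x$-degree, then the remaining generators on level $c+i$ in increasing order of $x$-degree. *)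

theory Defs
  imports Complex_Main "HOL-Library.Function_Algebras"
begin

(* A monomial x^a y^b z^c of k[x,y,z] is represented by its exponent triple (a,b,c). *)
type_synonym mono = "nat \<times> nat \<times> nat"

definition xd :: "mono \<Rightarrow> nat" where "xd m = fst m"
definition yd :: "mono \<Rightarrow> nat" where "yd m = fst (snd m)"
definition zd :: "mono \<Rightarrow> nat" where "zd m = snd (snd m)"

definition mdeg :: "mono \<Rightarrow> nat" where "mdeg m = xd m + yd m + zd m"

definition mdvd :: "mono \<Rightarrow> mono \<Rightarrow> bool" where
  "mdvd u v \<longleftrightarrow> xd u \<le> xd v \<and> yd u \<le> yd v \<and> zd u \<le> zd v"

definition mlcm :: "mono \<Rightarrow> mono \<Rightarrow> mono" where
  "mlcm u v = (max (xd u) (xd v), max (yd u) (yd v), max (zd u) (zd v))"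

(* exponent of variable i (0 = x, 1 = y, 2 = z) *)
definition expo :: "mono \<Rightarrow> nat \<Rightarrow> nat" where
  "expo m i = (if i = 0 then xd m else if i = 1 then yd m else zd m)"

definition in_ideal :: "mono set \<Rightarrow> mono \<Rightarrow> bool" where
  "in_ideal S m \<longleftrightarrow> (\<exists>g\<in>S. mdvd g m)"

definition mingens :: "mono set \<Rightarrow> mono set" where
  "mingens S = {m \<in> S. \<forall>m'\<in>S. mdvd m' m \<longrightarrow> m' = m}"

definition face_shift :: "mono \<Rightarrow> nat set \<Rightarrow> mono" where
  "face_shift b F = (xd b - (if 0 \<in> F then 1 else 0),
                     yd b - (if 1 \<in> F then 1 else 0),
                     zd b - (if 2 \<in> F then 1 else 0))"

(* upper Koszul simplicial complex K^b(I) = {F \<subseteq> {x,y,z} : x^(b-F) \<in> I} *)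
definition koszul_cx :: "mono set \<Rightarrow> mono \<Rightarrow> nat set set" where
  "koszul_cx S b = {F. F \<subseteq> {0,1,2} \<and> (\<forall>i\<in>F. 1 \<le> expo b i) \<and> in_ideal S (face_shift b F)}"

(* augmented simplicial chains over k supported on faces of cardinality q *)
definition chains :: "mono set \<Rightarrow> mono \<Rightarrow> nat \<Rightarrow> (nat set \<Rightarrow> 'k::field) set" where
  "chains S b q = {c. \<forall>F. c F \<noteq> 0 \<longrightarrow> F \<in> koszul_cx S b \<and> card F = q}"

definition bd :: "(nat set \<Rightarrow> 'k::field) \<Rightarrow> (nat set \<Rightarrow> 'k)" where
  "bd c = (\<lambda>G. \<Sum>j\<in>{0,1,2} - G. (-1) ^ card {l\<in>G. l < j} * c (insert j G))"

definition kscale :: "'k::field \<Rightarrow> (nat set \<Rightarrow> 'k) \<Rightarrow> (nat set \<Rightarrow> 'k)" where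
  "kscale a f = (\<lambda>x. a * f x)"

(* beta_{i,b}(I) = dim_k H~_{i-1}(K^b(I); k)  (Miller--Sturmfels, Thm. 1.34);
   homology at the chains on faces of cardinality i *)
definition betti :: "'k::field itself \<Rightarrow> mono set \<Rightarrow> nat \<Rightarrow> mono \<Rightarrow> nat" where
  "betti K S i b =
     vector_space.dim (kscale :: 'k \<Rightarrow> _) {c \<in> (chains S b i :: (nat set \<Rightarrow> 'k) set). bd c = 0}
     - vector_space.dim (kscale :: 'k \<Rightarrow> _) (bd ` (chains S b (Suc i) :: (nat set \<Rightarrow> 'k) set))"

definition linear_resolution :: "'k::field itself \<Rightarrow> nat \<Rightarrow> mono set \<Rightarrow> bool" where
  "linear_resolution K d S \<longleftrightarrow> (\<forall>i b. betti K S i b \<noteq> 0 \<longrightarrow> mdeg b = d + i)"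

definition dual_edge :: "mono \<Rightarrow> mono \<Rightarrow> bool" where
  "dual_edge f g \<longleftrightarrow> mdeg (mlcm f g) = mdeg f + 1 \<and> mdeg (mlcm f g) = mdeg g + 1"

definition GJ_verts :: "mono set \<Rightarrow> mono \<Rightarrow> mono \<Rightarrow> mono set" where
  "GJ_verts S f g = {h \<in> mingens S. mdvd h (mlcm f g)}"

definition GJ_connected :: "mono set \<Rightarrow> mono \<Rightarrow> mono \<Rightarrow> bool" where
  "GJ_connected S f g \<longleftrightarrow>
     (let V = GJ_verts S f g in
      \<forall>a\<in>V. \<forall>b\<in>V. (a, b) \<in> {(p, q). p \<in> V \<and> q \<in> V \<and> dual_edge p q}\<^sup>*)"

definition tree_ordering :: "mono list \<Rightarrow> bool" where
  "tree_ordering ms \<longleftrightarrow>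
    (let G = mingens (set ms); c = Min (zd ` G) in
     distinct ms \<and> set ms = G \<and>
     sorted_wrt (\<lambda>a b. zd a \<le> zd b) ms \<and>
     sorted_wrt (\<lambda>a b. xd a > xd b) (filter (\<lambda>m. zd m = c) ms) \<and>
     (\<forall>l. c < l \<and> (\<exists>g\<in>G. zd g = l) \<longrightarrow>
        (\<exists>m1 L1 L2.
           m1 \<in> G \<and> zd m1 = l \<and> (\<exists>g\<in>G. zd g = l - 1 \<and> dual_edge m1 g) \<and>
           (\<forall>m\<in>G. zd m = l \<and> (\<exists>g\<in>G. zd g = l - 1 \<and> dual_edge m g) \<longrightarrow> xd m \<le> xd m1) \<and>
           filter (\<lambda>m. zd m = l) ms = m1 # L1 @ L2 \<and>
           set L1 = {m \<in> G. zd m = l \<and> xd m < xd m1} \<and>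
           sorted_wrt (\<lambda>a b. xd a > xd b) L1 \<and>
           set L2 = {m \<in> G. zd m = l \<and> xd m > xd m1} \<and>
           sorted_wrt (\<lambda>a b. xd a < xd b) L2)))"

end

theory Submission
  imports Defs
begin

lemma vs_kscale: "vector_space (kscale :: 'k::field \<Rightarrow> (nat set \<Rightarrow> 'k) \<Rightarrow> (nat set \<Rightarrow> 'k))"
  by unfold_locales (simp_all add: kscale_def fun_eq_iff algebra_simps)

lemma coll_eq_single: "{l::nat. l = a \<and> P l} = (if P a then {a} else {})"
  by auto

lemma s10: "{Suc 0, 0} = {0, Suc 0}" and s20: "{2, 0::nat} = {0, 2}" and s21: "{2, Suc 0} = {Suc 0, 2}"
  by auto

lemma bd_empty: "bd c {} = c {0} + c {1} + c {2}"
  by (simp add: bd_def)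

lemma bd_s0: "bd c {0} = - c {0,1} - c {0,2}"
  by (simp add: bd_def insert_Diff_if coll_eq_single s10 s20 s21)

lemma bd_s1: "bd c {1} = c {0,1} - c {1,2}"
  by (simp add: bd_def insert_Diff_if coll_eq_single s10 s20 s21)

lemma bd_s2: "bd c {2} = c {0,2} + c {1,2}"
  by (simp add: bd_def insert_Diff_if coll_eq_single s10 s20 s21)

lemma bd_s1': "bd c {Suc 0} = c {0,Suc 0} - c {Suc 0,2}"
  using bd_s1[of c] by (simp only: One_nat_def)

lemma mdvd_refl[simp]: "mdvd a a" by (simp add: mdvd_def)
lemma mdvd_trans: "mdvd a b \<Longrightarrow> mdvd b c \<Longrightarrow> mdvd a c" by (auto simp: mdvd_def)

lemma face_shift_anti: "G \<subseteq> F \<Longrightarrow> mdvd (face_shift b F) (face_shift b G)"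
  by (auto simp: mdvd_def face_shift_def xd_def yd_def zd_def)

lemma kcx_down: "F \<in> koszul_cx S b \<Longrightarrow> G \<subseteq> F \<Longrightarrow> G \<in> koszul_cx S b"
  unfolding koszul_cx_def in_ideal_def
  using face_shift_anti mdvd_trans by blast

lemma sum_nonzero_ex: "sum f A \<noteq> 0 \<Longrightarrow> \<exists>x\<in>A. f x \<noteq> 0"
  by (meson sum.neutral)

lemma bd_chains:
  assumes "e \<in> chains S b (Suc q)"
  shows "bd e \<in> (chains S b q :: (nat set \<Rightarrow> 'k::field) set)"
  unfolding chains_def
proof (intro CollectI allI impI)
  fix G assume "bd e G \<noteq> (0::'k)"
  then obtain j where j: "j \<in> {0,1,2} - G" and nz: "e (insert j G) \<noteq> 0"
    unfolding bd_def using sum_nonzero_ex by force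
  have K: "insert j G \<in> koszul_cx S b" and c: "card (insert j G) = Suc q"
    using assms nz unfolding chains_def by auto
  have "insert j G \<subseteq> {0,1,2}" using K unfolding koszul_cx_def by auto
  hence fin: "finite G" by (meson finite.emptyI finite.insertI finite_subset subset_insertI)
  show "G \<in> koszul_cx S b \<and> card G = q"
    using kcx_down[OF K, of G] c j fin by auto
qed

lemma bd_bd:
  assumes "e \<in> (chains S b 2 :: (nat set \<Rightarrow> 'k::field) set)"
  shows "bd (bd e) = 0"
proof
  fix G
  have bc: "bd e \<in> (chains S b 1 :: (nat set \<Rightarrow> 'k::field) set)"
    using bd_chains[of e S b 1] assms by (simp add: numeral_2_eq_2)
  show "bd (bd e) G = 0 G"
  proof (cases "G = {}")
    case True
    have "bd (bd e) {} = 0"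
      unfolding bd_empty bd_s0 bd_s1 bd_s2 by (simp only: diff_add_eq add_diff_eq) (simp add: algebra_simps)
    then show ?thesis using True by simp
  next
    case False
    have "bd e (insert j G) = 0" if "j \<in> {0,1,2} - G" for j
    proof (rule ccontr)
      assume "bd e (insert j G) \<noteq> 0"
      then have "card (insert j G) = 1" using bc unfolding chains_def by auto
      then obtain x where x: "insert j G = {x}" by (auto simp: card_1_singleton_iff)
      then have "G \<subseteq> {x}" "j = x" by auto
      then show False using False that by auto
    qed
    then show ?thesis unfolding bd_def[of "bd e"] by (simp del: insert_Diff_if)
  qed
qed

lemma R1:
  fixes S b and i k m :: nat
  assumes lr: "linear_resolution TYPE('k::field) d S"
    and nd: "mdeg b \<noteq> d + 1"
    and Ki: "{i} \<in> koszul_cx S b" and Kk: "{k} \<in> koszul_cx S b" and ik: "i \<noteq> k"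
    and m: "m \<in> {0,1,2}" "m \<noteq> i" "m \<noteq> k"
    and nik: "{i,k} \<notin> koszul_cx S b"
    and nm: "\<not> ({i,m} \<in> koszul_cx S b \<and> {m,k} \<in> koszul_cx S b)"
  shows False
proof -
  interpret V: vector_space "kscale :: 'k \<Rightarrow> (nat set \<Rightarrow> 'k) \<Rightarrow> _" by (rule vs_kscale)
  define Z where "Z = {c \<in> (chains S b 1 :: (nat set \<Rightarrow> 'k) set). bd c = 0}"
  define Bd where "Bd = bd ` (chains S b (Suc 1) :: (nat set \<Rightarrow> 'k) set)"
  have "betti TYPE('k) S 1 b = 0" using lr nd unfolding linear_resolution_def
    by (metis add.commute plus_1_eq_Suc)
  hence betti0: "V.dim Z \<le> V.dim Bd" unfolding betti_def Z_def Bd_def by simp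
  have i3: "i \<in> {0,1,2}" "k \<in> {0,1,2}" using Ki Kk by (auto simp: koszul_cx_def)
  define c0 :: "nat set \<Rightarrow> 'k" where "c0 = (\<lambda>F. if F = {i} then 1 else if F = {k} then -1 else 0)"
  have c0Z: "c0 \<in> Z"
    unfolding Z_def
  proof (intro CollectI conjI)
    show "c0 \<in> chains S b 1" unfolding chains_def c0_def using Ki Kk by auto
    show "bd c0 = 0"
    proof
      fix G
      show "bd c0 G = 0 G"
      proof (cases "G = {}")
        case True
        have "bd c0 {} = 0" unfolding bd_empty c0_def using i3 ik by auto
        then show ?thesis using True by simp
      next
        case False
        have "c0 (insert j G) = 0" if "j \<in> {0,1,2} - G" for j
          unfolding c0_def using that False by auto
        then show ?thesis unfolding bd_def[of c0] by (simp del: insert_Diff_if)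
      qed
    qed
  qed
  have BdZ: "Bd \<subseteq> Z"
    unfolding Bd_def Z_def using bd_chains[of _ S b 1] bd_bd[of _ S b]
    by (auto simp: numeral_2_eq_2)
  define \<delta> where "\<delta> x = (\<lambda>F. if F = {x} then (1::'k) else 0)" for x :: nat
  have ZD: "Z \<subseteq> V.span (\<delta> ` {0,1,2})"
  proof
    fix c assume "c \<in> Z"
    hence cc: "c \<in> chains S b 1" unfolding Z_def by auto
    have eq: "c = kscale (c {0}) (\<delta> 0) + kscale (c {1}) (\<delta> 1) + kscale (c {2}) (\<delta> 2)"
    proof
      fix F
      show "c F = (kscale (c {0}) (\<delta> 0) + kscale (c {1}) (\<delta> 1) + kscale (c {2}) (\<delta> 2)) F"
      proof (cases "c F = 0")
        case True
        then show ?thesis by (auto simp: kscale_def \<delta>_def)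
      next
        case False
        then have "F \<in> koszul_cx S b" "card F = 1" using cc unfolding chains_def by auto
        then obtain x where "F = {x}" "x \<in> {0,1,2}"
          by (auto simp: card_1_singleton_iff koszul_cx_def)
        then show ?thesis by (auto simp: kscale_def \<delta>_def)
      qed
    qed
    show "c \<in> V.span (\<delta> ` {0,1,2})"
      by (subst eq) (intro V.span_add V.span_scale V.span_base; simp)
  qed
  define \<phi> where "\<phi> c = c {i} + (if {i,m} \<in> koszul_cx S b then c {m} else 0)" for c :: "nat set \<Rightarrow> 'k"
  have \<phi>Bd: "\<phi> x = 0" if xB: "x \<in> Bd" for x
  proof -
    obtain e where e: "e \<in> (chains S b 2 :: (nat set \<Rightarrow> 'k) set)" and x: "x = bd e"
      using xB unfolding Bd_def by (auto simp: numeral_2_eq_2)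
    have ez: "e F = 0" if "F \<notin> koszul_cx S b" for F using e that unfolding chains_def by auto
    have z1: "e {i,k} = 0" "e {k,i} = 0" using ez nik by (auto simp: insert_commute)
    have z2: "{i,m} \<in> koszul_cx S b \<Longrightarrow> e {m,k} = 0 \<and> e {k,m} = 0"
      using ez nm by (auto simp: insert_commute)
    have z3: "{i,m} \<notin> koszul_cx S b \<Longrightarrow> e {m,i} = 0 \<and> e {i,m} = 0"
      using ez by (auto simp: insert_commute)
    show ?thesis unfolding x \<phi>_def
      using i3 m ik z1 z2 z3
      by (auto simp: bd_s0 bd_s1 bd_s1' bd_s2 insert_commute)
  qed
  have sub: "V.subspace {c. \<phi> c = 0}"
    unfolding V.subspace_def \<phi>_def kscale_def by (auto simp: algebra_simps simp flip: distrib_left)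
  have spB: "V.span Bd \<subseteq> {c. \<phi> c = 0}"
    by (rule V.span_minimal) (use \<phi>Bd sub in auto)
  have "\<phi> c0 \<noteq> 0" unfolding \<phi>_def c0_def using m ik by auto
  hence c0nB: "c0 \<notin> V.span Bd" using spB by auto
  obtain B where B: "B \<subseteq> Bd" "V.independent B" "Bd \<subseteq> V.span B" "card B = V.dim Bd"
    by (rule V.basis_exists)
  obtain C where C: "C \<subseteq> Z" "V.independent C" "Z \<subseteq> V.span C" "card C = V.dim Z"
    by (rule V.basis_exists)
  have finC: "finite C"
    using V.independent_span_bound[of "\<delta> ` {0,1,2}" C] C(1,2) ZD by auto
  have c0nB': "c0 \<notin> V.span B" using c0nB V.span_mono[OF B(1)] by auto
  have indep: "V.independent (insert c0 B)" using V.independent_insertI[OF c0nB' B(2)] .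
  have sub2: "insert c0 B \<subseteq> V.span C"
    using c0Z B(1) BdZ C(3) by auto
  have bound: "finite (insert c0 B) \<and> card (insert c0 B) \<le> card C"
    using V.independent_span_bound[OF finC indep sub2] .
  have "c0 \<notin> B" using c0nB' V.span_base by auto
  hence "card (insert c0 B) = card B + 1" using bound by auto
  with bound B(4) C(4) betti0 show False by auto
qed

lemma R1':
  assumes lr: "linear_resolution TYPE('k::field) d S"
    and nd: "mdeg b \<noteq> d + 1"
    and Ki: "{i} \<in> koszul_cx S b" and Kk: "{k} \<in> koszul_cx S b"
  shows "i = k \<or> {i,k} \<in> koszul_cx S b \<or> (\<exists>m. {i,m} \<in> koszul_cx S b \<and> {m,k} \<in> koszul_cx S b)"
proof (rule ccontr)
  assume H: "\<not> ?thesis"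
  have i3: "i \<in> {0,1,2}" "k \<in> {0,1,2}" using Ki Kk by (auto simp: koszul_cx_def)
  obtain m where m: "m \<in> {0,1,2}" "m \<noteq> i" "m \<noteq> k"
  proof -
    have "\<exists>m::nat. m \<in> {0,1,2} \<and> m \<noteq> i \<and> m \<noteq> k"
      using i3 by (metis insertCI numeral_2_eq_2 One_nat_def n_not_Suc_n Suc_inject zero_neq_numeral)
    then show ?thesis using that by blast
  qed
  show False using R1[OF lr nd Ki Kk _ m] H by blast
qed

lemma xd_simp[simp]: "xd (a,b,c) = a" and yd_simp[simp]: "yd (a,b,c) = b" and zd_simp[simp]: "zd (a,b,c) = c"
  by (simp_all add: xd_def yd_def zd_def)

lemma mono_eqI: "xd a = xd b \<Longrightarrow> yd a = yd b \<Longrightarrow> zd a = zd b \<Longrightarrow> a = b"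
  by (auto simp: xd_def yd_def zd_def prod_eq_iff)

lemma mdvd_lcm1: "mdvd f (mlcm f g)" and mdvd_lcm2: "mdvd g (mlcm f g)"
  by (auto simp: mdvd_def mlcm_def)

lemma mlcm_least: "mdvd f c \<Longrightarrow> mdvd g c \<Longrightarrow> mdvd (mlcm f g) c"
  by (auto simp: mdvd_def mlcm_def)

lemma mdvd_deg: "mdvd a b \<Longrightarrow> mdeg a \<le> mdeg b"
  by (auto simp: mdvd_def mdeg_def)

lemma mdvd_deg_eq: "mdvd a b \<Longrightarrow> mdeg a = mdeg b \<Longrightarrow> a = b"
  by (rule mono_eqI) (auto simp: mdvd_def mdeg_def)

lemma fs_empty[simp]: "face_shift b {} = b"
  by (simp add: face_shift_def xd_def yd_def zd_def)

lemma fs_vertex: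
  assumes "mdvd f b" "f \<noteq> b" "f \<in> S"
  obtains i where "{i} \<in> koszul_cx S b" "mdvd f (face_shift b {i})"
proof -
  have "xd f < xd b \<or> yd f < yd b \<or> zd f < zd b"
  proof (rule ccontr)
    assume "\<not> (xd f < xd b \<or> yd f < yd b \<or> zd f < zd b)"
    then have "xd f = xd b" "yd f = yd b" "zd f = zd b" using assms(1) unfolding mdvd_def by auto
    then show False using assms(2) mono_eqI by blast
  qed
  then have "\<exists>i. {i} \<in> koszul_cx S b \<and> mdvd f (face_shift b {i})"
  proof (elim disjE)
    assume "xd f < xd b"
    then have "mdvd f (face_shift b {0})" using assms(1)
      by (auto simp: mdvd_def face_shift_def)
    then show ?thesis using assms \<open>xd f < xd b\<close>
      by (intro exI[of _ 0]) (auto simp: koszul_cx_def in_ideal_def expo_def)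
  next
    assume "yd f < yd b"
    then have "mdvd f (face_shift b {1})" using assms(1)
      by (auto simp: mdvd_def face_shift_def)
    then show ?thesis using assms \<open>yd f < yd b\<close>
      by (intro exI[of _ 1]) (auto simp: koszul_cx_def in_ideal_def expo_def)
  next
    assume "zd f < zd b"
    then have "mdvd f (face_shift b {2})" using assms(1)
      by (auto simp: mdvd_def face_shift_def)
    then show ?thesis using assms \<open>zd f < zd b\<close>
      by (intro exI[of _ 2]) (auto simp: koszul_cx_def in_ideal_def expo_def)
  qed
  then show ?thesis using that by blast
qed

lemma fs_deg:
  assumes "{t} \<in> koszul_cx S b"
  shows "mdeg (face_shift b {t}) < mdeg b"
  using assms by (auto simp: koszul_cx_def expo_def face_shift_def mdeg_def split: if_splits)

definition conn :: "mono set \<Rightarrow> mono \<Rightarrow> mono \<Rightarrow> bool" where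
  "conn W f g \<longleftrightarrow> (f, g) \<in> {(p, q). p \<in> W \<and> q \<in> W \<and> dual_edge p q}\<^sup>*"

definition Vset :: "mono set \<Rightarrow> mono \<Rightarrow> mono \<Rightarrow> mono set" where
  "Vset S f g = {h \<in> S. mdvd h (mlcm f g)}"

lemma conn_mono: "W \<subseteq> W' \<Longrightarrow> conn W f g \<Longrightarrow> conn W' f g"
  unfolding conn_def by (erule rtrancl_mono[THEN subsetD, rotated]) auto

lemma conn_trans: "conn W f g \<Longrightarrow> conn W g h \<Longrightarrow> conn W f h"
  unfolding conn_def by (rule rtrancl_trans)

lemma L:
  assumes lr: "linear_resolution TYPE('k::field) d S"
    and deg: "\<forall>m\<in>S. mdeg m = d"
  shows "f \<in> S \<Longrightarrow> g \<in> S \<Longrightarrow> conn (Vset S f g) f g"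
proof (induction "mdeg (mlcm f g)" arbitrary: f g rule: less_induct)
  case less
  define b where "b = mlcm f g"
  have fb: "mdvd f b" and gb: "mdvd g b" unfolding b_def by (rule mdvd_lcm1, rule mdvd_lcm2)
  have fV: "f \<in> Vset S f g" and gV: "g \<in> Vset S f g"
    using less.prems fb gb unfolding Vset_def b_def by auto
  have STEP: "conn (Vset S f g) h1 h2"
    if h: "h1 \<in> S" "h2 \<in> S" "{t} \<in> koszul_cx S b" "mdvd h1 (face_shift b {t})" "mdvd h2 (face_shift b {t})"
    for h1 h2 t
  proof -
    have l: "mdvd (mlcm h1 h2) (face_shift b {t})" using h mlcm_least by blast
    have "mdeg (mlcm h1 h2) < mdeg (mlcm f g)"
      using mdvd_deg[OF l] fs_deg[OF h(3)] unfolding b_def by simp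
    then have c: "conn (Vset S h1 h2) h1 h2" using less.hyps h(1,2) by blast
    have fsb: "mdvd (face_shift b {t}) b" using face_shift_anti[of "{}" "{t}" b] by simp
    have "Vset S h1 h2 \<subseteq> Vset S f g"
      unfolding Vset_def b_def[symmetric] using mdvd_trans[OF _ mdvd_trans[OF l fsb]] by blast
    then show ?thesis using conn_mono c by blast
  qed
  show ?case
  proof (cases "f = g \<or> dual_edge f g")
    case True
    then show ?thesis using fV gV unfolding conn_def by auto
  next
    case False
    have df: "mdeg f = d" "mdeg g = d" using deg less.prems by auto
    have "f \<noteq> b"
    proof
      assume "f = b"
      then have "g = f" using mdvd_deg_eq[OF gb] df by simp
      then show False using False by simp
    qed
    have "g \<noteq> b"
    proof
      assume "g = b"
      then have "f = g" using mdvd_deg_eq[OF fb] df by simp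
      then show False using False by simp
    qed
    have nd: "mdeg b \<noteq> d + 1" using False df unfolding dual_edge_def b_def by auto
    obtain i where i: "{i} \<in> koszul_cx S b" "mdvd f (face_shift b {i})"
      using fs_vertex[OF fb \<open>f \<noteq> b\<close> less.prems(1)] by blast
    obtain k where k: "{k} \<in> koszul_cx S b" "mdvd g (face_shift b {k})"
      using fs_vertex[OF gb \<open>g \<noteq> b\<close> less.prems(2)] by blast
    from R1'[OF lr nd i(1) k(1)]
    show ?thesis
    proof (elim disjE exE conjE)
      assume "i = k"
      then show ?thesis using STEP[OF less.prems i(1) i(2)] k by simp
    next
      assume ik: "{i,k} \<in> koszul_cx S b"
      then obtain h where h: "h \<in> S" "mdvd h (face_shift b {i,k})"
        unfolding koszul_cx_def in_ideal_def by auto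
      have a1: "mdvd h (face_shift b {i})"
        by (rule mdvd_trans[OF h(2) face_shift_anti]) auto
      have a2: "mdvd h (face_shift b {k})"
        by (rule mdvd_trans[OF h(2) face_shift_anti]) auto
      have c1: "conn (Vset S f g) f h" by (rule STEP[OF less.prems(1) h(1) i(1) i(2) a1])
      have c2: "conn (Vset S f g) h g" by (rule STEP[OF h(1) less.prems(2) k(1) a2 k(2)])
      show ?thesis by (rule conn_trans[OF c1 c2])
    next
      fix m assume im: "{i,m} \<in> koszul_cx S b" and mk: "{m,k} \<in> koszul_cx S b"
      obtain h1 where h1: "h1 \<in> S" "mdvd h1 (face_shift b {i,m})"
        using im unfolding koszul_cx_def in_ideal_def by auto
      obtain h2 where h2: "h2 \<in> S" "mdvd h2 (face_shift b {m,k})"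
        using mk unfolding koszul_cx_def in_ideal_def by auto
      have Km: "{m} \<in> koszul_cx S b" using kcx_down[OF im] by auto
      have a1: "mdvd h1 (face_shift b {i})"
        by (rule mdvd_trans[OF h1(2) face_shift_anti]) auto
      have a2: "mdvd h1 (face_shift b {m})"
        by (rule mdvd_trans[OF h1(2) face_shift_anti]) auto
      have a3: "mdvd h2 (face_shift b {m})"
        by (rule mdvd_trans[OF h2(2) face_shift_anti]) auto
      have a4: "mdvd h2 (face_shift b {k})"
        by (rule mdvd_trans[OF h2(2) face_shift_anti]) auto
      have c1: "conn (Vset S f g) f h1" by (rule STEP[OF less.prems(1) h1(1) i(1) i(2) a1])
      have c2: "conn (Vset S f g) h1 h2" by (rule STEP[OF h1(1) h2(1) Km a2 a3])
      have c3: "conn (Vset S f g) h2 g" by (rule STEP[OF h2(1) less.prems(2) k(1) a4 k(2)])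
      show ?thesis by (rule conn_trans[OF conn_trans[OF c1 c2] c3])
    qed
  qed
qed

definition before :: "'a list \<Rightarrow> 'a \<Rightarrow> 'a \<Rightarrow> bool" where
  "before xs a b \<longleftrightarrow> (\<exists>ys zs. xs = ys @ zs \<and> a \<in> set ys \<and> b \<in> set zs)"

lemma before_sorted: "sorted_wrt R xs \<Longrightarrow> before xs a b \<Longrightarrow> R a b"
  unfolding before_def by (auto simp: sorted_wrt_append)

lemma before_filter: "before xs a b \<Longrightarrow> P a \<Longrightarrow> P b \<Longrightarrow> before (filter P xs) a b"
proof -
  assume "before xs a b" "P a" "P b"
  then obtain ys zs where "xs = ys @ zs" "a \<in> set ys" "b \<in> set zs" unfolding before_def by auto
  then show ?thesis unfolding before_def using \<open>P a\<close> \<open>P b\<close>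
    by (intro exI[of _ "filter P ys"] exI[of _ "filter P zs"]) auto
qed

lemma mdeg_eq: "mdeg m = xd m + yd m + zd m" by (simp add: mdeg_def)

theorem mainTheorem5:
  fixes ms :: "mono list" and d j :: nat and u v :: mono
  assumes "distinct ms"
    and "\<forall>m\<in>set ms. mdeg m = d"
    and "linear_resolution TYPE('k::field) d (set ms)"
    and "tree_ordering ms"
    and "2 \<le> j" and "j \<le> length ms"
    and "u \<in> mingens (set (take j ms))" and "v \<in> mingens (set (take j ms))"
    and "zd u = zd v"
  shows "GJ_connected (set (take j ms)) u v"
proof -
  note deg = assms(2) and lr = assms(3)
  define S where "S = set ms"
  define Sj where "Sj = set (take j ms)"
  define c0 where "c0 = Min (zd ` S)"
  have T0: "distinct ms \<and> set ms = mingens S \<and>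
     sorted_wrt (\<lambda>a b. zd a \<le> zd b) ms \<and>
     sorted_wrt (\<lambda>a b. xd a > xd b) (filter (\<lambda>m. zd m = Min (zd ` mingens S)) ms) \<and>
     (\<forall>l. Min (zd ` mingens S) < l \<and> (\<exists>g\<in>mingens S. zd g = l) \<longrightarrow>
        (\<exists>m1 L1 L2.
           m1 \<in> mingens S \<and> zd m1 = l \<and> (\<exists>g\<in>mingens S. zd g = l - 1 \<and> dual_edge m1 g) \<and>
           (\<forall>m\<in>mingens S. zd m = l \<and> (\<exists>g\<in>mingens S. zd g = l - 1 \<and> dual_edge m g) \<longrightarrow> xd m \<le> xd m1) \<and>
           filter (\<lambda>m. zd m = l) ms = m1 # L1 @ L2 \<and>
           set L1 = {m \<in> mingens S. zd m = l \<and> xd m < xd m1} \<and>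
           sorted_wrt (\<lambda>a b. xd a > xd b) L1 \<and>
           set L2 = {m \<in> mingens S. zd m = l \<and> xd m > xd m1} \<and>
           sorted_wrt (\<lambda>a b. xd a < xd b) L2))"
    using assms(4) unfolding tree_ordering_def Let_def S_def .
  have GS: "mingens S = S" using T0 unfolding S_def by simp
  note T0' = T0[unfolded GS, folded c0_def]
  have T: "set ms = mingens S" "sorted_wrt (\<lambda>a b. zd a \<le> zd b) ms"
    "sorted_wrt (\<lambda>a b. xd a > xd b) (filter (\<lambda>m. zd m = c0) ms)"
    using conjunct1[OF conjunct2[OF T0]] conjunct1[OF conjunct2[OF conjunct2[OF T0']]]
      conjunct1[OF conjunct2[OF conjunct2[OF conjunct2[OF T0']]]] by blast+
  have T4: "\<exists>m1 L1 L2.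
           m1 \<in> S \<and> 
           filter (\<lambda>m. zd m = l) ms = m1 # L1 @ L2 \<and>
           set L1 = {m \<in> S. zd m = l \<and> xd m < xd m1} \<and>
           sorted_wrt (\<lambda>a b. xd a > xd b) L1 \<and>
           set L2 = {m \<in> S. zd m = l \<and> xd m > xd m1} \<and>
           sorted_wrt (\<lambda>a b. xd a < xd b) L2" if "c0 < l" "\<exists>g\<in>S. zd g = l" for l
  proof -
    have T4': "\<forall>l. c0 < l \<and> (\<exists>g\<in>S. zd g = l) \<longrightarrow>
        (\<exists>m1 L1 L2.
           m1 \<in> S \<and> zd m1 = l \<and> (\<exists>g\<in>S. zd g = l - 1 \<and> dual_edge m1 g) \<and>
           (\<forall>m\<in>S. zd m = l \<and> (\<exists>g\<in>S. zd g = l - 1 \<and> dual_edge m g) \<longrightarrow> xd m \<le> xd m1) \<and>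
           filter (\<lambda>m. zd m = l) ms = m1 # L1 @ L2 \<and>
           set L1 = {m \<in> S. zd m = l \<and> xd m < xd m1} \<and>
           sorted_wrt (\<lambda>a b. xd a > xd b) L1 \<and>
           set L2 = {m \<in> S. zd m = l \<and> xd m > xd m1} \<and>
           sorted_wrt (\<lambda>a b. xd a < xd b) L2)"
      by (rule conjunct2[OF conjunct2[OF conjunct2[OF conjunct2[OF T0']]]])
    from T4'[rule_format, OF conjI[OF that]] obtain m1 L1 L2 where
      "m1 \<in> S" "filter (\<lambda>m. zd m = l) ms = m1 # L1 @ L2"
           "set L1 = {m \<in> S. zd m = l \<and> xd m < xd m1}"
           "sorted_wrt (\<lambda>a b. xd a > xd b) L1"
           "set L2 = {m \<in> S. zd m = l \<and> xd m > xd m1}"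
           "sorted_wrt (\<lambda>a b. xd a < xd b) L2" by (elim exE conjE) blast
    then show ?thesis by blast
  qed
  have SjS: "Sj \<subseteq> S" unfolding Sj_def S_def by (meson set_take_subset)
  have mSj: "mingens Sj = Sj"
  proof -
    have "m' = m" if "m \<in> Sj" "m' \<in> Sj" "mdvd m' m" for m m'
      using that SjS T(1) unfolding mingens_def S_def by auto
    then show ?thesis unfolding mingens_def by auto
  qed
  have uS: "u \<in> Sj" "v \<in> Sj" using assms(7,8) mSj unfolding Sj_def by auto
  define c where "c = zd u"
  have claim: "h \<in> Sj" if hS: "h \<in> S" and hd: "mdvd h (mlcm u v)" for h
  proof (rule ccontr)
    assume hn: "h \<notin> Sj"
    have hdrop: "h \<in> set (drop j ms)" using hS hn unfolding S_def Sj_def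
      by (metis Un_iff append_take_drop_id set_append)
    have bu: "before ms w h" if "w \<in> Sj" for w
      unfolding before_def using that hdrop unfolding Sj_def
      by (intro exI[of _ "take j ms"] exI[of _ "drop j ms"]) auto
    have "zd u \<le> zd h" using before_sorted[OF T(2) bu[OF uS(1)]] .
    moreover have "zd h \<le> c" using hd assms(9) unfolding c_def mdvd_def mlcm_def by auto
    ultimately have zh: "zd h = c" unfolding c_def by simp
    have dh: "mdeg h = d" "mdeg u = d" "mdeg v = d" using deg hS uS SjS unfolding S_def by auto
    have hu: "xd h \<noteq> xd w" if "w \<in> {u,v}" for w
    proof
      assume "xd h = xd w"
      moreover have "zd h = zd w" using zh that assms(9) c_def by auto
      ultimately have "yd h = yd w" using dh that unfolding mdeg_eq by auto
      then have "h = w" using mono_eqI \<open>xd h = xd w\<close> \<open>zd h = zd w\<close> by blast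
      then show False using hn uS that by auto
    qed
    have hu1: "xd h \<noteq> xd u" and hu2: "xd h \<noteq> xd v" using hu by auto
    have hx: "xd h \<le> max (xd u) (xd v)" "yd h \<le> max (yd u) (yd v)"
      using hd unfolding mdvd_def mlcm_def by auto
    have lo: "\<exists>w\<in>{u,v}. xd w < xd h"
    proof (rule ccontr)
      assume "\<not> ?thesis"
      then have "xd h < xd u" "xd h < xd v" using hu1 hu2 by (auto simp: not_less order.order_iff_strict)
      then show False using hx dh zh assms(9) unfolding mdeg_eq c_def by auto
    qed
    have hi: "\<exists>w\<in>{u,v}. xd h < xd w"
    proof (rule ccontr)
      assume "\<not> ?thesis"
      then have "xd u < xd h" "xd v < xd h" using hu1 hu2 by (auto simp: not_less order.order_iff_strict)
      then show False using hx by auto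
    qed
    define F where "F = filter (\<lambda>m. zd m = c) ms"
    have bF: "before F w h" if "w \<in> {u,v}" for w
      unfolding F_def using that uS assms(9) zh c_def
      by (intro before_filter bu) auto
    show False
    proof (cases "c = c0")
      case True
      obtain w where w: "w \<in> {u,v}" "xd w < xd h" using lo by blast
      have sF0: "sorted_wrt (\<lambda>a b. xd a > xd b) F" using T(3) True unfolding F_def by simp
      have "xd w > xd h" using before_sorted[OF sF0 bF[OF w(1)]] by simp
      then show False using w by simp
    next
      case False
      have "c0 \<le> c" unfolding c0_def c_def using uS SjS unfolding S_def by auto
      with False have "c0 < c" by simp
      moreover have "\<exists>g\<in>S. zd g = c" using uS SjS c_def by auto
      ultimately have ex: "\<exists>m1 L1 L2.
           m1 \<in> S \<and> 
           filter (\<lambda>m. zd m = c) ms = m1 # L1 @ L2 \<and>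
           set L1 = {m \<in> S. zd m = c \<and> xd m < xd m1} \<and>
           sorted_wrt (\<lambda>a b. xd a > xd b) L1 \<and>
           set L2 = {m \<in> S. zd m = c \<and> xd m > xd m1} \<and>
           sorted_wrt (\<lambda>a b. xd a < xd b) L2" by (rule T4)
      then obtain m1 L1 L2 where m1: "m1 \<in> S" "filter (\<lambda>m. zd m = c) ms = m1 # L1 @ L2"
        "set L1 = {m \<in> S. zd m = c \<and> xd m < xd m1}" "sorted_wrt (\<lambda>a b. xd a > xd b) L1"
        "set L2 = {m \<in> S. zd m = c \<and> xd m > xd m1}" "sorted_wrt (\<lambda>a b. xd a < xd b) L2"
        by (elim exE conjE)
      have Feq: "F = m1 # L1 @ L2" using m1(2) unfolding F_def .
      define x1 where "x1 = xd m1"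
      define \<kappa> where "\<kappa> a = (if xd a \<le> x1 then x1 - xd a else x1 + xd a)" for a
      have L1x: "xd a < x1" if "a \<in> set L1" for a using that m1(3) x1_def by auto
      have L2x: "xd a > x1" if "a \<in> set L2" for a using that m1(5) x1_def by auto
      have s1: "sorted_wrt (\<lambda>a b. \<kappa> a < \<kappa> b) L1"
      proof (rule sorted_wrt_mono_rel[OF _ m1(4)])
        fix a b assume ab: "a \<in> set L1" "b \<in> set L1" "xd a > xd b"
        then have "xd a < x1" "xd b < x1" using L1x by auto
        then show "\<kappa> a < \<kappa> b" using ab(3) unfolding \<kappa>_def by simp
      qed
      have s2: "sorted_wrt (\<lambda>a b. \<kappa> a < \<kappa> b) L2"
      proof (rule sorted_wrt_mono_rel[OF _ m1(6)])
        fix a b assume ab: "a \<in> set L2" "b \<in> set L2" "xd a < xd b"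
        then have "xd a > x1" "xd b > x1" using L2x by auto
        then show "\<kappa> a < \<kappa> b" using ab(3) unfolding \<kappa>_def by simp
      qed
      have k1: "0 < \<kappa> a \<and> \<kappa> a \<le> x1" if "a \<in> set L1" for a
        using L1x[OF that] unfolding \<kappa>_def by simp
      have k2: "x1 < \<kappa> a" if "a \<in> set L2" for a
        using L2x[OF that] unfolding \<kappa>_def by simp
      have k0: "\<kappa> m1 = 0" unfolding \<kappa>_def x1_def by simp
      have sF: "sorted_wrt (\<lambda>a b. \<kappa> a < \<kappa> b) F"
        unfolding Feq sorted_wrt.simps(2) sorted_wrt_append
      proof (intro conjI ballI s1 s2)
        fix y assume "y \<in> set (L1 @ L2)"
        then have "y \<in> set L1 \<or> y \<in> set L2" by simp
        then show "\<kappa> m1 < \<kappa> y" using k0 k1[of y] k2[of y] by (elim disjE) simp_all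
      next
        fix a b assume "a \<in> set L1" "b \<in> set L2"
        then show "\<kappa> a < \<kappa> b" using k1[of a] k2[of b] by simp
      qed
      show False
      proof (cases "xd h \<le> x1")
        case True
        obtain w where w: "w \<in> {u,v}" "xd w < xd h" using lo by blast
        have "\<kappa> w < \<kappa> h" using before_sorted[OF sF bF[OF w(1)]] .
        then show False using w True unfolding \<kappa>_def by auto
      next
        case False
        obtain w where w: "w \<in> {u,v}" "xd h < xd w" using hi by blast
        have "\<kappa> w < \<kappa> h" using before_sorted[OF sF bF[OF w(1)]] .
        then show False using w False unfolding \<kappa>_def by auto
      qed
    qed
  qed
  have VV: "GJ_verts Sj u v = Vset S u v"
    unfolding GJ_verts_def mSj Vset_def using claim SjS by auto
  show ?thesis
    unfolding GJ_connected_def Let_def Sj_def[symmetric] VV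
  proof (intro ballI)
    fix a b assume a: "a \<in> Vset S u v" and b: "b \<in> Vset S u v"
    have "conn (Vset S a b) a b"
      by (rule L[OF lr[folded S_def] deg[folded S_def]]) (use a b in \<open>auto simp: Vset_def\<close>)
    moreover have "Vset S a b \<subseteq> Vset S u v"
      using a b mlcm_least mdvd_trans unfolding Vset_def by blast
    ultimately show "(a, b) \<in> {(p, q). p \<in> Vset S u v \<and> q \<in> Vset S u v \<and> dual_edge p q}\<^sup>*"
      using conn_mono unfolding conn_def by blast
  qed
qed

end
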